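(* Assume $q>2$. For every integer $k\ge1$, in $K_\infty$: $$\zeta_C(q^k)\,\zeta_C(q^k-1)=\zeta_C(2q^k-1)+\zeta_C(q^k-1,q^k).$$
   Context: $A=\mathbb{F}_q[\theta]$, $A^+$ the monic polynomials, $K_\infty=\mathbb{F}_q((1/\theta))$. $\zeta_C(n)=\sum_{a\in A^+}a^{-n}$ and $\zeta_C(n_1,n_2)=\sum_{a_1,a_2\in A^+,\ \deg a_1>\deg a_2}a_1^{-n_1}a_2^{-n_2}$, for integers $n,n_1,n_2\ge1$. *)

theory Defs
  imports "HOL-Computational_Algebra.Polynomial" "HOL-Computational_Algebra.Formal_Laurent_Series" "HOL-Library.Cardinality"
begin

text \<open>F_q is modelled by a finite field type 'a with CARD('a) = q.
  A = 'a poly (variable theta).  K_infinity = F_q((1/theta)) is modelled by 'a fls,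
  the formal Laurent series in the variable X = 1/theta, with its library
  (1/theta)-adic metric (dist = 2^(-subdegree)).  Thus theta = fls_X_inv.\<close>

definition poly_to_Kinf :: "'a::field poly \<Rightarrow> 'a fls" where
  "poly_to_Kinf p = poly (map_poly fls_const p) fls_X_inv"

definition monic_deg :: "nat \<Rightarrow> 'a::field poly set" where
  "monic_deg d = {a. lead_coeff a = 1 \<and> degree a = d}"

definition monic_deg_less :: "nat \<Rightarrow> 'a::field poly set" where
  "monic_deg_less d = {a. lead_coeff a = 1 \<and> degree a < d}"

definition zetaC :: "nat \<Rightarrow> 'a::{finite,field} fls" where
  "zetaC n = (\<Sum>d. \<Sum>a\<in>monic_deg d. inverse (poly_to_Kinf a ^ n))"

definition zetaC2 :: "nat \<Rightarrow> nat \<Rightarrow> 'a::{finite,field} fls" where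
  "zetaC2 n1 n2 = (\<Sum>d. \<Sum>a1\<in>monic_deg d. inverse (poly_to_Kinf a1 ^ n1) *
      (\<Sum>a2\<in>monic_deg_less d. inverse (poly_to_Kinf a2 ^ n2)))"

end

theory Submission
  imports Defs "HOL-Computational_Algebra.Primes"
begin
unbundle fps_syntax

lemma ff_pow_card:
  fixes x :: "'a::{finite,field}"
  shows "x ^ CARD('a) = x"
proof (cases "x = 0")
  case False
  have "x * (\<Prod>y\<in>UNIV-{0}. x * y) = x * x ^ (card (UNIV :: 'a set) - 1) * \<Prod>(UNIV-{0})"
    by (simp add: prod.distrib mult_ac)
  also have "x * x ^ (card (UNIV :: 'a set) - 1) = x ^ Suc (card (UNIV :: 'a set) - 1)"
    by (subst power_Suc) auto
  also have "Suc (card (UNIV :: 'a set) - 1) = card (UNIV :: 'a set)"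
    using finite_UNIV_card_ge_0[where ?'a = 'a] by simp
  also have "(\<Prod>y\<in>UNIV-{0}. x * y) = (\<Prod>y\<in>UNIV-{0}. y)"
    by (rule prod.reindex_bij_witness[of _ "\<lambda>y. y / x" "\<lambda>y. x * y"]) (use False in auto)
  finally show ?thesis
    by simp
qed (use finite_UNIV_card_ge_0[where ?'a = 'a] in auto)

lemma ff_binom_zero:
  assumes "0 < j" "j < CARD('a::{finite,field})"
  shows "of_nat (CARD('a) choose j) = (0::'a)"
proof -
  define q where "q = CARD('a)"
  have q0: "q > 0" using assms q_def by auto
  have eq: "[:1,1:]^q = monom (1::'a) q + 1"
  proof (rule poly_eqI_degree_lead_coeff[where n=q and A=UNIV])
    show "coeff ([:1, 1:] ^ q) q = coeff (monom (1::'a) q + 1) q"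
      using q0 by (simp add: coeff_linear_power)
    show "q \<le> card (UNIV::'a set)" by (simp add: q_def)
    show "degree ([:1::'a, 1:] ^ q) \<le> q"
      using degree_power_le[of "[:1::'a,1:]" q] by simp
    show "degree (monom (1::'a) q + 1) \<le> q"
      by (rule degree_add_le) (simp_all add: degree_monom_eq)
    fix z :: 'a
    show "poly ([:1, 1:] ^ q) z = poly (monom 1 q + 1) z"
      by (simp add: poly_monom q_def ff_pow_card add.commute)
  qed
  have "coeff ([:1,1:]^q) j = of_nat (q choose j)"
    using assms by (simp add: coeff_linear_poly_power q_def)
  moreover have "coeff ([:1,1:]^q) j = coeff (monom (1::'a) q + 1) j" by (simp only: eq)
  moreover have "coeff (monom (1::'a) q + 1) j = 0" using assms by (simp add: q_def coeff_monom)
  ultimately show ?thesis by (metis q_def)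
qed

lemma fls_binom_zero:
  assumes "0 < j" "j < CARD('a::{finite,field})"
  shows "of_nat (CARD('a) choose j) = (0::'a fls)"
proof -
  have "CHAR('a) dvd (CARD('a) choose j)"
    using ff_binom_zero[OF assms] of_nat_eq_0_iff_char_dvd by blast
  then show ?thesis
    by (simp add: of_nat_eq_0_iff_char_dvd)
qed

lemma frob1:
  fixes x y :: "'a::{finite,field} fls"
  shows "(x + y) ^ CARD('a) = x ^ CARD('a) + y ^ CARD('a)"
proof -
  define n where "n = CARD('a)"
  have "n > 0" unfolding n_def by simp
  have "(x + y) ^ n = (\<Sum>k\<le>n. of_nat (n choose k) * x ^ k * y ^ (n - k))"
    by (rule binomial_ring)
  also have "\<dots> = (\<Sum>k\<in>{0,n}. of_nat (n choose k) * x ^ k * y ^ (n - k))"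
  proof (intro sum.mono_neutral_right ballI)
    fix k assume "k \<in> {..n} - {0, n}"
    hence k: "k > 0" "k < n"
      by auto
    thus "of_nat (n choose k) * x ^ k * y ^ (n - k) = 0"
      using fls_binom_zero[of k, where 'a='a] by (simp add: n_def)
  qed auto
  finally show ?thesis
    using \<open>n > 0\<close> by (simp add: add_ac n_def)
qed

lemma frob:
  fixes x y :: "'a::{finite,field} fls"
  shows "(x + y) ^ (CARD('a) ^ k) = x ^ (CARD('a) ^ k) + y ^ (CARD('a) ^ k)"
proof (induction k)
  case (Suc k)
  then show ?case by (simp add: power_mult frob1 mult.commute[of "CARD('a)"])
qed simp

lemma frob_diff:
  fixes x y :: "'a::{finite,field} fls"
  shows "(x - y) ^ (CARD('a) ^ k) = x ^ (CARD('a) ^ k) - y ^ (CARD('a) ^ k)"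
  using frob[of "x - y" y k] by (simp add: algebra_simps)

lemma frob_sum:
  fixes f :: "'b \<Rightarrow> 'a::{finite,field} fls"
  shows "(sum f A) ^ (CARD('a) ^ k) = (\<Sum>i\<in>A. f i ^ (CARD('a) ^ k))"
  by (induction A rule: infinite_finite_induct) (auto simp: frob power_0_left)



lemma iota_nth:
  "poly_to_Kinf (p :: 'a::field poly) $$ m = (if m \<le> 0 then coeff p (nat (-m)) else 0)"
proof (induction p arbitrary: m)
  case (pCons a p)
  have e: "poly_to_Kinf (pCons a p) = fls_const a + fls_shift 1 (poly_to_Kinf p)"
    by (simp add: poly_to_Kinf_def map_poly_pCons fls_X_inv_times_conv_shift)
  show ?case
  proof (cases "m < 0")
    case True
    then have "nat (-m) = Suc (nat (-(m+1)))" by simp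
    then show ?thesis using True by (simp add: e pCons.IH)
  next
    case False
    then show ?thesis by (cases "m = 0") (simp_all add: e pCons.IH)
  qed
qed (simp add: poly_to_Kinf_def)

lemma iota_add: "poly_to_Kinf (p + q) = poly_to_Kinf p + poly_to_Kinf (q :: 'a::field poly)"
  by (rule fls_eqI) (simp add: iota_nth)

lemma iota_diff: "poly_to_Kinf (p - q) = poly_to_Kinf p - poly_to_Kinf (q :: 'a::field poly)"
  by (rule fls_eqI) (simp add: iota_nth)

lemma iota_smult: "poly_to_Kinf (smult c p) = fls_const c * poly_to_Kinf (p :: 'a::field poly)"
  by (rule fls_eqI) (simp add: iota_nth)

lemma iota_inj: "poly_to_Kinf p = poly_to_Kinf (q :: 'a::field poly) \<Longrightarrow> p = q"
proof (rule poly_eqI)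
  fix n assume "poly_to_Kinf p = poly_to_Kinf q"
  then have "poly_to_Kinf p $$ (- int n) = poly_to_Kinf q $$ (- int n)" by simp
  then show "coeff p n = coeff q n" by (simp add: iota_nth)
qed

lemma iota_zero [simp]: "poly_to_Kinf (0 :: 'a::field poly) = 0"
  by (simp add: poly_to_Kinf_def)

lemma iota_nonzero: "p \<noteq> 0 \<Longrightarrow> poly_to_Kinf (p :: 'a::field poly) \<noteq> 0"
  using iota_inj[of p 0] by auto

lemma iota_subdeg:
  assumes "p \<noteq> 0"
  shows "fls_subdegree (poly_to_Kinf (p :: 'a::field poly)) = - int (degree p)"
proof (rule fls_subdegree_eqI)
  show "poly_to_Kinf p $$ (- int (degree p)) \<noteq> 0"
    using assms by (simp add: iota_nth)
  fix k assume "k < - int (degree p)"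
  then have "degree p < nat (-k)" by linarith
  then show "poly_to_Kinf p $$ k = 0"
    by (simp add: iota_nth coeff_eq_0)
qed

definition vb :: "int \<Rightarrow> 'a::zero fls \<Rightarrow> bool" where
  "vb M x \<longleftrightarrow> (\<forall>m<M. x $$ m = 0)"

lemma vb_subdeg: "x \<noteq> 0 \<Longrightarrow> M \<le> fls_subdegree x \<Longrightarrow> vb M x"
  unfolding vb_def by auto

lemma vb_mono: "vb M x \<Longrightarrow> N \<le> M \<Longrightarrow> vb N x"
  unfolding vb_def by auto

lemma vb_add: "vb M x \<Longrightarrow> vb M y \<Longrightarrow> vb M (x + (y :: 'a::monoid_add fls))"
  unfolding vb_def by auto

lemma vb_diff: "vb M x \<Longrightarrow> vb M y \<Longrightarrow> vb M (x - (y :: 'a::group_add fls))"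
  unfolding vb_def by auto

lemma vb_0 [simp]: "vb M 0"
  unfolding vb_def by auto

lemma vb_sum: "(\<And>i. i \<in> A \<Longrightarrow> vb M (f i)) \<Longrightarrow> vb M (sum f A :: 'a::comm_monoid_add fls)"
  by (induction A rule: infinite_finite_induct) (auto simp: vb_def)

lemma vb_mult:
  assumes "vb a x" "vb b (y :: 'a::field fls)"
  shows "vb (a + b) (x * y)"
proof (cases "x = 0 \<or> y = 0")
  case False
  then have "x * y \<noteq> 0" by simp
  have "a \<le> fls_subdegree x"
    using False assms(1) by (intro fls_subdegree_geI) (auto simp: vb_def)
  moreover have "b \<le> fls_subdegree y"
    using False assms(2) by (intro fls_subdegree_geI) (auto simp: vb_def)
  moreover have "fls_subdegree (x * y) \<ge> fls_subdegree x + fls_subdegree y"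
    using fls_mult_subdegree_ge[OF \<open>x * y \<noteq> 0\<close>] .
  ultimately show ?thesis using \<open>x * y \<noteq> 0\<close> by (intro vb_subdeg) auto
qed auto

lemma vb_inv_pow:
  "vb (int n * int (degree p)) (inverse (poly_to_Kinf (p :: 'a::field poly) ^ n))"
proof (cases "p = 0")
  case True
  then show ?thesis by (cases n) (auto simp: vb_def)
next
  case False
  then have ne: "poly_to_Kinf p \<noteq> 0" by (rule iota_nonzero)
  then have "inverse (poly_to_Kinf p ^ n) \<noteq> 0" by simp
  moreover have "fls_subdegree (inverse (poly_to_Kinf p ^ n)) = int n * int (degree p)"
    using False by (simp add: fls_subdegree_pow iota_subdeg)
  ultimately show ?thesis by (intro vb_subdeg) auto
qed



lemma fls_sum_nth: "(sum f A) $$ m = (\<Sum>i\<in>A. f i $$ m)"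
  by (induction A rule: infinite_finite_induct) auto

lemma vb_tendsto:
  fixes u :: "nat \<Rightarrow> 'a::group_add fls"
  assumes "\<And>M. \<exists>N0. \<forall>N\<ge>N0. vb M (u N - L)"
  shows "u \<longlonglongrightarrow> L"
proof (rule metric_LIMSEQ_I)
  fix r :: real assume "0 < r"
  obtain M :: nat where M: "(1/2::real) ^ M < r"
    using real_arch_pow_inv[OF \<open>0 < r\<close>, of "1/2"] by auto
  obtain N0 where N0: "\<forall>N\<ge>N0. vb (int M) (u N - L)" using assms by blast
  have "dist (u N) L < r" if "N \<ge> N0" for N
  proof (cases "u N = L")
    case True then show ?thesis using \<open>0 < r\<close> by simp
  next
    case False
    then have ne: "u N - L \<noteq> 0" by simp
    have ge: "int M \<le> fls_subdegree (u N - L)"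
      using ne N0 that by (intro fls_subdegree_geI) (auto simp: vb_def)
    then have "dist (u N) L = inverse (2 ^ nat (fls_subdegree (u N - L)))"
      using False by (simp add: dist_fls_def)
    also have "\<dots> \<le> inverse (2 ^ M)"
      using ge by (intro le_imp_inverse_le) (auto intro!: power_increasing)
    also have "\<dots> = (1/2) ^ M" by (simp add: power_one_over inverse_eq_divide)
    finally show ?thesis using M by simp
  qed
  then show "\<exists>no. \<forall>n\<ge>no. dist (u n) L < r" by blast
qed

lemma vb_summable:
  fixes f :: "nat \<Rightarrow> 'a::field fls"
  assumes f: "\<And>d. vb (int d) (f d)"
  shows "\<exists>L. (\<forall>M. \<exists>N0. \<forall>N\<ge>N0. vb M ((\<Sum>d<N. f d) - L)) \<and> f sums L"
proof -
  define g where "g = (\<lambda>m. (\<Sum>d<Suc (nat m). f d) $$ m)"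
  have g_neg: "g m = 0" if "m < 0" for m
    using f[of 0] that by (simp add: g_def vb_def)
  have "g \<in> {f::int \<Rightarrow> 'a. \<forall>\<^sub>\<infinity> n::nat. f (- int n) = 0}"
  proof -
    have "{n::nat. \<not> g (- int n) = 0} \<subseteq> {0}" using g_neg by force
    then have "finite {n::nat. \<not> g (- int n) = 0}" using finite_subset by blast
    then show ?thesis by (simp add: eventually_cofinite)
  qed
  then have Lnth: "Abs_fls g $$ m = g m" for m by (simp add: Abs_fls_inverse)
  define L where "L = Abs_fls g"
  have stab: "(\<Sum>d<N. f d) $$ m = g m" if "m < int N" for N m
  proof (cases "m < 0")
    case True
    then show ?thesis using g_neg f by (simp add: fls_sum_nth vb_def)
  next
    case False
    then have sub: "{..<Suc (nat m)} \<subseteq> {..<N}" using that by auto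
    have "(\<Sum>d<N. f d $$ m) = (\<Sum>d<Suc (nat m). f d $$ m)"
    proof (rule sum.mono_neutral_right)
      show "\<forall>i\<in>{..<N} - {..<Suc (nat m)}. f i $$ m = 0"
        using f False by (auto simp: vb_def)
    qed (use sub in auto)
    then show ?thesis by (simp add: g_def fls_sum_nth)
  qed
  have conv: "\<forall>M. \<exists>N0. \<forall>N\<ge>N0. vb M ((\<Sum>d<N. f d) - L)"
  proof
    fix M
    show "\<exists>N0. \<forall>N\<ge>N0. vb M ((\<Sum>d<N. f d) - L)"
      by (rule exI[of _ "nat M"]) (auto simp: vb_def L_def Lnth intro!: stab)
  qed
  moreover have "f sums L"
    unfolding sums_def by (rule vb_tendsto) (use conv in blast)
  ultimately show ?thesis by blast
qed

lemma vb_summable_suminf: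
  fixes f :: "nat \<Rightarrow> 'a::field fls"
  assumes f: "\<And>d. vb (int d) (f d)"
  shows "\<forall>M. \<exists>N0. \<forall>N\<ge>N0. vb M ((\<Sum>d<N. f d) - suminf f)"
  using vb_summable[OF f] sums_unique by metis

lemma vb_lim_mult:
  fixes u v :: "nat \<Rightarrow> 'a::field fls"
  assumes u: "\<forall>M. \<exists>N0. \<forall>N\<ge>N0. vb M (u N - U)"
    and v: "\<forall>M. \<exists>N0. \<forall>N\<ge>N0. vb M (v N - V)"
    and u0: "\<And>N. vb 0 (u N)" and v0: "\<And>N. vb 0 (v N)"
  shows "\<forall>M. \<exists>N0. \<forall>N\<ge>N0. vb M (u N * v N - U * V)"
proof
  fix M
  obtain A where A: "\<forall>N\<ge>A. vb 0 (v N - V)" using v by blast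
  have V0: "vb 0 V" using vb_diff[OF v0[of A] A[rule_format, of A]] by simp
  obtain B where B: "\<forall>N\<ge>B. vb M (u N - U)" using u by blast
  obtain C where C: "\<forall>N\<ge>C. vb M (v N - V)" using v by blast
  have "vb M (u N * v N - U * V)" if "N \<ge> max B C" for N
  proof -
    have "u N * v N - U * V = u N * (v N - V) + (u N - U) * V" by (simp add: algebra_simps)
    moreover have "vb M (u N * (v N - V))"
      using vb_mult[OF u0[of N] C[rule_format, of N]] that by simp
    moreover have "vb M ((u N - U) * V)"
      using vb_mult[OF B[rule_format, of N] V0] that by simp
    ultimately show ?thesis by (simp add: vb_add)
  qed
  then show "\<exists>N0. \<forall>N\<ge>N0. vb M (u N * v N - U * V)" by blast
qed

lemma vb_lim_add:
  fixes u v :: "nat \<Rightarrow> 'a::field fls"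
  assumes u: "\<forall>M. \<exists>N0. \<forall>N\<ge>N0. vb M (u N - U)"
    and v: "\<forall>M. \<exists>N0. \<forall>N\<ge>N0. vb M (v N - V)"
  shows "\<forall>M. \<exists>N0. \<forall>N\<ge>N0. vb M ((u N + v N) - (U + V))"
proof
  fix M
  obtain B where B: "\<forall>N\<ge>B. vb M (u N - U)" using u by blast
  obtain C where C: "\<forall>N\<ge>C. vb M (v N - V)" using v by blast
  have "vb M ((u N + v N) - (U + V))" if "N \<ge> max B C" for N
    using vb_add[OF B[rule_format, of N] C[rule_format, of N]] that
    by (simp add: algebra_simps)
  then show "\<exists>N0. \<forall>N\<ge>N0. vb M ((u N + v N) - (U + V))" by blast
qed

lemma vb_lim_unique:
  fixes u :: "nat \<Rightarrow> 'a::field fls"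
  assumes u: "\<forall>M. \<exists>N0. \<forall>N\<ge>N0. vb M (u N - U)"
    and v: "\<forall>M. \<exists>N0. \<forall>N\<ge>N0. vb M (u N - V)"
  shows "U = V"
proof (rule fls_eqI)
  fix m
  obtain B where B: "\<forall>N\<ge>B. vb (m+1) (u N - U)" using u by blast
  obtain C where C: "\<forall>N\<ge>C. vb (m+1) (u N - V)" using v by blast
  have "vb (m+1) (u (max B C) - U)" "vb (m+1) (u (max B C) - V)"
    using B C by auto
  then have "(u (max B C) - U) $$ m = 0" "(u (max B C) - V) $$ m = 0"
    unfolding vb_def by auto
  then show "U $$ m = V $$ m" by simp
qed



lemma finite_deg_less: "finite {p :: 'a::{finite,field} poly. degree p < n}"
proof -
  have "{p :: 'a poly. degree p < n} \<subseteq> Poly ` {xs. set xs \<subseteq> UNIV \<and> length xs = n}"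
  proof
    fix p :: "'a poly" assume "p \<in> {p. degree p < n}"
    then have d: "degree p < n" by simp
    have "p = Poly (map (coeff p) [0..<n])"
    proof (rule poly_eqI)
      fix i show "coeff p i = coeff (Poly (map (coeff p) [0..<n])) i"
        using d by (cases "i < n") (auto simp: nth_default_def coeff_eq_0)
    qed
    then show "p \<in> Poly ` {xs. set xs \<subseteq> UNIV \<and> length xs = n}" by force
  qed
  moreover have "finite (Poly ` {xs :: 'a list. set xs \<subseteq> UNIV \<and> length xs = n})"
    by (intro finite_imageI finite_lists_length_eq) simp
  ultimately show ?thesis by (rule finite_subset)
qed

lemma finite_monic_deg: "finite (monic_deg d :: 'a::{finite,field} poly set)"
  by (rule finite_subset[OF _ finite_deg_less[of "Suc d"]]) (auto simp: monic_deg_def)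

lemma finite_monic_deg_less: "finite (monic_deg_less d :: 'a::{finite,field} poly set)"
  by (rule finite_subset[OF _ finite_deg_less[of d]]) (auto simp: monic_deg_less_def)

lemma monic_deg_less_UN: "monic_deg_less d = (\<Union>e\<in>{..<d}. monic_deg e)"
  by (auto simp: monic_deg_less_def monic_deg_def)

lemma sum_monic_deg_less:
  "(\<Sum>m\<in>monic_deg_less d. f m) = (\<Sum>e<d. \<Sum>m\<in>monic_deg e. f m)"
  for f :: "'a::{finite,field} poly \<Rightarrow> 'b::comm_monoid_add"
  unfolding monic_deg_less_UN
  by (rule sum.UNION_disjoint) (auto simp: finite_monic_deg[unfolded monic_deg_def] monic_deg_def)

lemma monic_diff:
  assumes "a \<in> monic_deg d" "a' \<in> monic_deg d" "a \<noteq> a'"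
  shows "degree (a - a') < d" "a - a' \<noteq> 0"
proof -
  show "a - a' \<noteq> 0" using assms by simp
  have "\<forall>k\<ge>d. coeff (a - a') k = 0"
  proof (intro allI impI)
    fix k assume "d \<le> k"
    then show "coeff (a - a') k = 0"
      using assms by (cases "k = d") (auto simp: monic_deg_def coeff_eq_0)
  qed
  then show "degree (a - a') < d" using assms by (intro degree_lessI) auto
qed

lemma monic_add:
  assumes "a \<in> monic_deg d" "degree c < d"
  shows "a + c \<in> monic_deg d" "a - c \<in> monic_deg d"
proof -
  have a: "lead_coeff a = 1" "degree a = d" using assms by (auto simp: monic_deg_def)
  have lt: "degree c < degree a" using assms a by simp
  have "degree (a + c) = degree a" by (rule degree_add_eq_left[OF lt])
  moreover have "lead_coeff (c + a) = lead_coeff a" by (rule lead_coeff_add_le[OF lt])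
  ultimately show "a + c \<in> monic_deg d" using a by (simp add: monic_deg_def add.commute)
  have lt2: "degree (-c) < degree a" using lt by simp
  have "degree (a + -c) = degree a" by (rule degree_add_eq_left[OF lt2])
  moreover have "lead_coeff (-c + a) = lead_coeff a" by (rule lead_coeff_add_le[OF lt2])
  ultimately show "a - c \<in> monic_deg d" using a by (simp add: monic_deg_def add.commute)
qed



lemma ex_lambda:
  assumes "CARD('a::{finite,field}) > 2"
  shows "\<exists>l::'a. l \<noteq> 0 \<and> l \<noteq> 1"
proof (rule ccontr)
  assume "\<not> ?thesis"
  then have "(UNIV :: 'a set) \<subseteq> {0, 1}" by auto
  then have "CARD('a) \<le> card {0::'a, 1}" by (intro card_mono) auto
  also have "\<dots> \<le> 2" by (simp add: card_insert_le_m1)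
  finally show False using assms by simp
qed

lemma sumQ:
  assumes "CARD('a::{finite,field}) > 2"
  shows "(\<Sum>c\<in>{c::'a poly. degree c < d \<and> c \<noteq> 0}. inverse (poly_to_Kinf c)) = 0"
proof -
  obtain l :: 'a where l: "l \<noteq> 0" "l \<noteq> 1" using ex_lambda[OF assms] by blast
  define V0 where "V0 = {c::'a poly. degree c < d \<and> c \<noteq> 0}"
  define Q where "Q = (\<Sum>c\<in>V0. inverse (poly_to_Kinf c))"
  have "Q = (\<Sum>c\<in>V0. inverse (poly_to_Kinf (smult l c)))"
    unfolding Q_def
    by (rule sum.reindex_bij_witness[where i="smult l" and j="smult (inverse l)"])
       (use l in \<open>auto simp: V0_def\<close>)
  also have "\<dots> = fls_const (inverse l) * Q"
    by (simp add: Q_def iota_smult sum_distrib_left fls_inverse_const)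
  finally have "(1 - fls_const (inverse l)) * Q = 0" by (simp add: algebra_simps)
  moreover have "fls_const (inverse l) \<noteq> 1"
  proof
    assume "fls_const (inverse l) = 1"
    then have "fls_const (inverse l) $$ 0 = (1 :: 'a fls) $$ 0" by simp
    then have "inverse l = 1" by simp
    then show False using l by (simp add: inverse_eq_iff_eq)
  qed
  ultimately have "Q = 0" by simp
  then show ?thesis by (simp add: Q_def V0_def)
qed

lemma ff_pow_s:
  fixes x :: "'a::{finite,field}"
  shows "x ^ (CARD('a) ^ k) = x"
  by (induction k) (simp_all add: power_mult ff_pow_card mult.commute[of "CARD('a)"])

lemma ff_pow_s1:
  fixes x :: "'a::{finite,field}"
  assumes "x \<noteq> 0" "k \<ge> 1"
  shows "x ^ (CARD('a) ^ k - 1) = 1"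
proof -
  have pos: "CARD('a) ^ k \<ge> 1" by simp
  have "x ^ (CARD('a) ^ k - 1) * x = x ^ (CARD('a) ^ k)"
    using pos by (metis Suc_diff_le diff_Suc_1 power_Suc2)
  also have "\<dots> = x" by (rule ff_pow_s)
  finally show ?thesis using assms by simp
qed

lemma of_nat_card_fls: "of_nat CARD('a::{finite,field}) = (0 :: 'a fls)"
proof -
  have "1 < CARD('a)"
  proof -
    have "card {0::'a, 1} \<le> CARD('a)" by (intro card_mono) auto
    then show ?thesis by simp
  qed
  then show ?thesis using fls_binom_zero[of 1, where 'a='a] by simp
qed

lemma sumP:
  assumes "k \<ge> 1"
  shows "(\<Sum>c\<in>{c::'a::{finite,field} poly. degree c < d \<and> c \<noteq> 0}.
            inverse (poly_to_Kinf c ^ (CARD('a) ^ k - 1)))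
       = - (\<Sum>m\<in>monic_deg_less d. inverse (poly_to_Kinf m ^ (CARD('a) ^ k - 1)))"
proof -
  define r where "r = CARD('a) ^ k - 1"
  define V0 where "V0 = {c::'a poly. degree c < d \<and> c \<noteq> 0}"
  define h where "h = (\<lambda>(l::'a, m::'a poly). smult l m)"
  define B where "B = (UNIV - {0::'a}) \<times> (monic_deg_less d :: 'a poly set)"
  define g where "g = (\<lambda>c::'a poly. inverse (poly_to_Kinf c ^ r))"
  have img: "V0 = h ` B"
  proof
    show "h ` B \<subseteq> V0"
      by (auto simp: h_def B_def V0_def monic_deg_less_def)
    show "V0 \<subseteq> h ` B"
    proof
      fix c assume c: "c \<in> V0"
      then have c0: "c \<noteq> 0" by (simp add: V0_def)
      then have lc: "lead_coeff c \<noteq> 0" by simp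
      have "smult (inverse (lead_coeff c)) c \<in> monic_deg_less d"
        using c lc by (simp add: monic_deg_less_def V0_def lead_coeff_smult)
      moreover have "c = smult (lead_coeff c) (smult (inverse (lead_coeff c)) c)"
        using lc by simp
      ultimately show "c \<in> h ` B"
        using lc unfolding h_def B_def by (intro image_eqI[of _ _ "(lead_coeff c, smult (inverse (lead_coeff c)) c)"]) auto
    qed
  qed
  have inj: "inj_on h B"
  proof (rule inj_onI)
    fix u v assume u: "u \<in> B" and v: "v \<in> B" and e: "h u = h v"
    obtain l m where lm: "u = (l, m)" by (cases u)
    obtain l' m' where lm': "v = (l', m')" by (cases v)
    have m1: "lead_coeff m = 1" "lead_coeff m' = 1" "l \<noteq> 0" "l' \<noteq> 0"
      using u v lm lm' by (auto simp: B_def monic_deg_less_def)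
    have e': "smult l m = smult l' m'" using e lm lm' by (simp add: h_def)
    then have "lead_coeff (smult l m) = lead_coeff (smult l' m')" by simp
    then have ll: "l = l'" using m1 by (simp add: lead_coeff_smult)
    have "smult (inverse l) (smult l m) = smult (inverse l) (smult l' m')" using e' by simp
    then have "m = m'" using m1 ll by (simp add: smult_smult)
    then show "u = v" using ll lm lm' by simp
  qed
  have term_eq: "g (h (l, m)) = g m" if "l \<noteq> 0" for l m
  proof -
    have "poly_to_Kinf (smult l m) ^ r = fls_const (l ^ r) * poly_to_Kinf m ^ r"
      by (simp add: iota_smult power_mult_distrib fls_const_power)
    also have "l ^ r = 1" using ff_pow_s1[OF that assms] by (simp add: r_def)
    finally show ?thesis by (simp add: g_def h_def)
  qed
  have "(\<Sum>c\<in>V0. g c) = (\<Sum>x\<in>B. g (h x))"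
    unfolding img by (simp add: sum.reindex[OF inj])
  also have "\<dots> = (\<Sum>l\<in>UNIV - {0::'a}. \<Sum>m\<in>monic_deg_less d. g (h (l, m)))"
    unfolding B_def by (simp add: sum.cartesian_product)
  also have "\<dots> = (\<Sum>l\<in>UNIV - {0::'a}. \<Sum>m\<in>monic_deg_less d. g m)"
    by (intro sum.cong refl) (simp add: term_eq)
  also have "\<dots> = of_nat (CARD('a) - 1) * (\<Sum>m\<in>monic_deg_less d. g m)"
    by (simp add: card_Diff_singleton)
  also have "of_nat (CARD('a) - 1) = (of_nat CARD('a) - 1 :: 'a fls)"
    by (simp add: of_nat_diff)
  also have "\<dots> = -1" by (simp add: of_nat_card_fls)
  finally show ?thesis by (simp add: g_def V0_def r_def)
qed



lemma inv_pow_Suc_mult: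
  fixes z :: "'b::field"
  assumes "z \<noteq> 0"
  shows "z * inverse z ^ Suc r = inverse z ^ r"
  using assms by (simp add: power_Suc field_simps)

lemma key_pair:
  fixes x y :: "'a::{finite,field} fls" and k :: nat
  assumes "x \<noteq> 0" "y \<noteq> 0" "x \<noteq> y"
  defines "s \<equiv> CARD('a) ^ k"
  shows "inverse x ^ s * inverse y ^ (s - 1)
       = inverse (x - y) ^ s * inverse y ^ (s - 1) - inverse (x - y) ^ s * inverse x ^ (s - 1)
         + inverse x ^ s * inverse (x - y) ^ (s - 1)"
proof -
  define r where "r = s - 1"
  have sr: "s = Suc r" unfolding r_def s_def by simp
  define c where "c = x - y"
  have c0: "c \<noteq> 0" using assms by (simp add: c_def)
  have h1: "inverse x * inverse y = inverse c * (inverse y - inverse x)"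
    using assms c0 by (simp add: c_def field_simps)
  have h2: "(inverse x * inverse y) ^ s = inverse c ^ s * (inverse y ^ s - inverse x ^ s)"
    unfolding h1 power_mult_distrib s_def by (simp add: frob_diff)
  have xc: "x - c = y" by (simp add: c_def)
  have hy: "y * inverse y ^ s = inverse y ^ r" using inv_pow_Suc_mult[OF assms(2)] sr by simp
  have hx: "x * inverse x ^ s = inverse x ^ r" using inv_pow_Suc_mult[OF assms(1)] sr by simp
  have hc: "c * inverse c ^ s = inverse c ^ r" using inv_pow_Suc_mult[OF c0] sr by simp
  have "inverse x ^ s * inverse y ^ r = y * (inverse x * inverse y) ^ s"
    by (simp add: power_mult_distrib hy[symmetric] algebra_simps)
  also have "\<dots> = inverse c ^ s * (y * inverse y ^ s) - inverse c ^ s * ((x - c) * inverse x ^ s)"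
    using \<open>c \<noteq> 0\<close> by (simp only: h2 xc) (simp add: algebra_simps)
  also have "(x - c) * inverse x ^ s = x * inverse x ^ s - c * inverse x ^ s"
    by (simp add: algebra_simps)
  also have "inverse c ^ s * (y * inverse y ^ s) - inverse c ^ s * (x * inverse x ^ s - c * inverse x ^ s)
      = inverse c ^ s * (y * inverse y ^ s) - inverse c ^ s * (x * inverse x ^ s)
        + (c * inverse c ^ s) * inverse x ^ s"
    by (simp add: algebra_simps)
  finally have "inverse x ^ s * inverse y ^ r = inverse c ^ s * (y * inverse y ^ s)
      - inverse c ^ s * (x * inverse x ^ s) + (c * inverse c ^ s) * inverse x ^ s" .
  then have "inverse x ^ s * inverse y ^ r = inverse c ^ s * inverse y ^ r
      - inverse c ^ s * inverse x ^ r + inverse c ^ r * inverse x ^ s"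
    by (simp only: hx hy hc)
  then show ?thesis by (simp add: r_def c_def mult.commute)
qed

lemma monic_nonzero: "a \<in> monic_deg d \<Longrightarrow> a \<noteq> 0"
  by (auto simp: monic_deg_def)

lemma reindex1:
  assumes "a \<in> monic_deg d"
  shows "(\<Sum>a'\<in>monic_deg d - {a}. g (a - a')) = (\<Sum>c\<in>{c. degree c < d \<and> c \<noteq> 0}. g c)"
  by (rule sum.reindex_bij_witness[where i="\<lambda>c. a - c" and j="\<lambda>a'. a - a'"])
     (use assms monic_diff monic_add in auto)

lemma reindex2:
  assumes "a \<in> monic_deg d"
  shows "(\<Sum>a'\<in>monic_deg d - {a}. g (a' - a)) = (\<Sum>c\<in>{c. degree c < d \<and> c \<noteq> 0}. g c)"
  by (rule sum.reindex_bij_witness[where i="\<lambda>c. a + c" and j="\<lambda>a'. a' - a"])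
     (use assms monic_diff monic_add in auto)



lemma swap_minus:
  assumes "finite N"
  shows "(\<Sum>a\<in>N. \<Sum>a'\<in>N - {a}. f a a') = (\<Sum>a'\<in>N. \<Sum>a\<in>N - {a'}. f a a')"
proof -
  have "(\<Sum>a\<in>N. \<Sum>a'\<in>{y. y \<in> N \<and> a \<noteq> y}. f a a') = (\<Sum>a'\<in>N. \<Sum>a\<in>{x. x \<in> N \<and> x \<noteq> a'}. f a a')"
    by (rule sum.swap_restrict[OF assms assms])
  moreover have "\<And>a. {y. y \<in> N \<and> a \<noteq> y} = N - {a}" "\<And>a'. {x. x \<in> N \<and> x \<noteq> a'} = N - {a'}" by auto
  ultimately show ?thesis by simp
qed

lemma per_degree:
  fixes d k :: nat
  assumes q: "CARD('a::{finite,field}) > 2" and k: "k \<ge> 1"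
  defines "s \<equiv> CARD('a) ^ k"
  shows "(\<Sum>a\<in>monic_deg d. inverse (poly_to_Kinf a ^ s)) *
          ((\<Sum>a\<in>monic_deg d. inverse (poly_to_Kinf a ^ (s - 1)))
           + (\<Sum>m\<in>monic_deg_less d. inverse (poly_to_Kinf m ^ (s - 1))))
       = (\<Sum>a\<in>(monic_deg d :: 'a poly set). inverse (poly_to_Kinf a ^ (2 * s - 1)))"
proof -
  define N where "N = (monic_deg d :: 'a poly set)"
  define V0 where "V0 = {c::'a poly. degree c < d \<and> c \<noteq> 0}"
  define A where "A = (\<lambda>a::'a poly. inverse (poly_to_Kinf a))"
  have finN: "finite N" by (simp add: N_def finite_monic_deg)
  have s1: "s \<ge> 1" by (simp add: s_def)
  have conv: "\<And>a n. inverse (poly_to_Kinf a ^ n) = A a ^ n" by (simp add: A_def power_inverse)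
  define X where "X = (\<Sum>a\<in>N. A a ^ s)"
  define Y where "Y = (\<Sum>a\<in>N. A a ^ (s - 1))"
  define Z where "Z = (\<Sum>a\<in>N. A a ^ (2 * s - 1))"
  define P where "P = (\<Sum>c\<in>V0. A c ^ (s - 1))"
  define R where "R = (\<Sum>m\<in>monic_deg_less d. A m ^ (s - 1))"
  have PR: "P = - R"
    using sumP[OF k, of d, where 'a='a] by (simp add: P_def R_def V0_def conv s_def)
  have Q0: "(\<Sum>c\<in>V0. A c ^ s) = 0"
  proof -
    have "(\<Sum>c\<in>V0. A c ^ s) = (\<Sum>c\<in>V0. A c) ^ s"
      by (simp add: s_def frob_sum)
    also have "(\<Sum>c\<in>V0. A c) = 0"
      using sumQ[OF q, of d] by (simp add: A_def V0_def)
    finally show ?thesis using s1 by simp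
  qed
  define F1 where "F1 = (\<lambda>a a'. A (a - a') ^ s * A a' ^ (s - 1))"
  define F2 where "F2 = (\<lambda>a a'. A (a - a') ^ s * A a ^ (s - 1))"
  define F3 where "F3 = (\<lambda>a a'. A a ^ s * A (a - a') ^ (s - 1))"
  have tdiag: "A a ^ s * A a ^ (s - 1) = A a ^ (2 * s - 1)" for a
  proof -
    have "s + (s - 1) = 2 * s - 1" using s1 by simp
    then show ?thesis by (metis power_add)
  qed
  have toff: "A a ^ s * A a' ^ (s - 1) = F1 a a' - F2 a a' + F3 a a'"
    if "a \<in> N" "a' \<in> N - {a}" for a a'
  proof -
    have a0: "a \<noteq> 0" "a' \<noteq> 0" using that by (auto simp: N_def monic_deg_def)
    have x0: "poly_to_Kinf a \<noteq> 0" "poly_to_Kinf a' \<noteq> 0" using a0 by (simp_all add: iota_nonzero)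
    have xy: "poly_to_Kinf a \<noteq> poly_to_Kinf a'" using that iota_inj by blast
    show ?thesis
      using key_pair[OF x0 xy, of k]
      by (simp add: A_def F1_def F2_def F3_def iota_diff s_def)
  qed
  have "X * Y = (\<Sum>a\<in>N. \<Sum>a'\<in>N. A a ^ s * A a' ^ (s - 1))"
    by (simp add: X_def Y_def sum_product)
  also have "\<dots> = (\<Sum>a\<in>N. A a ^ (2 * s - 1) + (\<Sum>a'\<in>N - {a}. A a ^ s * A a' ^ (s - 1)))"
    apply (intro sum.cong refl)
    apply (subst sum.remove[OF finN], assumption)
    apply (simp only: tdiag)
    done
  also have "\<dots> = Z + (\<Sum>a\<in>N. \<Sum>a'\<in>N - {a}. A a ^ s * A a' ^ (s - 1))"
    by (simp only: Z_def sum.distrib)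
  also have "(\<Sum>a\<in>N. \<Sum>a'\<in>N - {a}. A a ^ s * A a' ^ (s - 1))
      = (\<Sum>a\<in>N. \<Sum>a'\<in>N - {a}. F1 a a' - F2 a a' + F3 a a')"
    by (rule sum.cong[OF refl], rule sum.cong[OF refl], rule toff)
  also have "(\<Sum>a\<in>N. \<Sum>a'\<in>N - {a}. F1 a a' - F2 a a' + F3 a a')
      = (\<Sum>a\<in>N. \<Sum>a'\<in>N - {a}. F1 a a') - (\<Sum>a\<in>N. \<Sum>a'\<in>N - {a}. F2 a a')
        + (\<Sum>a\<in>N. \<Sum>a'\<in>N - {a}. F3 a a')"
    by (simp add: sum.distrib sum_subtractf)
  also have "(\<Sum>a\<in>N. \<Sum>a'\<in>N - {a}. F1 a a') = 0"
  proof -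
    have "(\<Sum>a\<in>N. \<Sum>a'\<in>N - {a}. F1 a a') = (\<Sum>a'\<in>N. \<Sum>a\<in>N - {a'}. F1 a a')"
      by (rule swap_minus[OF finN])
    also have "\<dots> = (\<Sum>a'\<in>N. A a' ^ (s - 1) * (\<Sum>a\<in>N - {a'}. A (a - a') ^ s))"
      by (simp add: F1_def sum_distrib_left mult.commute)
    also have "\<dots> = (\<Sum>a'\<in>N. A a' ^ (s - 1) * (\<Sum>c\<in>V0. A c ^ s))"
      by (intro sum.cong refl) (use reindex2[of _ d "\<lambda>c. A c ^ s"] in \<open>simp add: N_def V0_def\<close>)
    finally show ?thesis by (simp add: Q0)
  qed
  also have "(\<Sum>a\<in>N. \<Sum>a'\<in>N - {a}. F2 a a') = 0"
  proof -
    have "(\<Sum>a\<in>N. \<Sum>a'\<in>N - {a}. F2 a a') = (\<Sum>a\<in>N. A a ^ (s - 1) * (\<Sum>a'\<in>N - {a}. A (a - a') ^ s))"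
      by (simp add: F2_def sum_distrib_left mult.commute)
    also have "\<dots> = (\<Sum>a\<in>N. A a ^ (s - 1) * (\<Sum>c\<in>V0. A c ^ s))"
      by (intro sum.cong refl) (use reindex1[of _ d "\<lambda>c. A c ^ s"] in \<open>simp add: N_def V0_def\<close>)
    finally show ?thesis by (simp add: Q0)
  qed
  also have "(\<Sum>a\<in>N. \<Sum>a'\<in>N - {a}. F3 a a') = X * P"
  proof -
    have "(\<Sum>a\<in>N. \<Sum>a'\<in>N - {a}. F3 a a') = (\<Sum>a\<in>N. A a ^ s * (\<Sum>a'\<in>N - {a}. A (a - a') ^ (s - 1)))"
      by (simp add: F3_def sum_distrib_left)
    also have "\<dots> = (\<Sum>a\<in>N. A a ^ s * P)"
      by (intro sum.cong refl) (use reindex1[of _ d "\<lambda>c. A c ^ (s - 1)"] in \<open>simp add: N_def V0_def P_def\<close>)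
    finally show ?thesis by (simp add: X_def sum_distrib_right)
  qed
  finally have "X * Y = Z - X * R" by (simp add: PR)
  then have "X * (Y + R) = Z" by (simp add: algebra_simps)
  then show ?thesis by (simp add: X_def Y_def Z_def R_def N_def conv)
qed



lemma vb_term:
  assumes "a \<in> monic_deg d" "n \<ge> 1"
  shows "vb (int d) (inverse (poly_to_Kinf (a :: 'a::field poly) ^ n))"
proof (rule vb_mono[OF vb_inv_pow])
  have "degree a = d" using assms by (simp add: monic_deg_def)
  moreover have "int d * 1 \<le> int d * int n" using assms(2) by (intro mult_left_mono) auto
  ultimately show "int d \<le> int n * int (degree a)" by (simp add: mult.commute)
qed

lemma vb_term0:
  "vb 0 (inverse (poly_to_Kinf (a :: 'a::field poly) ^ n))"
  by (rule vb_mono[OF vb_inv_pow]) simp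

theorem mainTheorem7:
  fixes k :: nat
  assumes "CARD('a) > 2"
    and "k \<ge> 1"
  shows "(zetaC (CARD('a) ^ k) :: 'a::{finite,field} fls) * zetaC (CARD('a) ^ k - 1)
           = zetaC (2 * CARD('a) ^ k - 1) + zetaC2 (CARD('a) ^ k - 1) (CARD('a) ^ k)"
proof -
  define s where "s = CARD('a) ^ k"
  have s2: "s \<ge> 2"
  proof -
    have "CARD('a) ^ 1 \<le> CARD('a) ^ k" using assms by (intro power_increasing) auto
    then show ?thesis using assms by (simp add: s_def)
  qed
  define X where "X = (\<lambda>d. \<Sum>a\<in>monic_deg d. inverse (poly_to_Kinf a ^ s) :: 'a fls)"
  define Y where "Y = (\<lambda>d. \<Sum>a\<in>monic_deg d. inverse (poly_to_Kinf a ^ (s - 1)) :: 'a fls)"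
  define Z where "Z = (\<lambda>d. \<Sum>a\<in>monic_deg d. inverse (poly_to_Kinf a ^ (2 * s - 1)) :: 'a fls)"
  define R where "R = (\<lambda>d. \<Sum>a2\<in>monic_deg_less d. inverse (poly_to_Kinf a2 ^ s) :: 'a fls)"
  define W where "W = (\<lambda>d. \<Sum>a1\<in>monic_deg d. inverse (poly_to_Kinf a1 ^ (s - 1)) * R d :: 'a fls)"
  have eqs: "zetaC (CARD('a) ^ k) = suminf X" "zetaC (CARD('a) ^ k - 1) = suminf Y"
      "zetaC (2 * CARD('a) ^ k - 1) = suminf Z" "zetaC2 (CARD('a) ^ k - 1) (CARD('a) ^ k) = suminf W"
    by (simp_all add: zetaC_def zetaC2_def X_def Y_def Z_def W_def R_def s_def)
  have vX: "vb (int d) (X d)" for d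
    unfolding X_def by (rule vb_sum) (rule vb_term, use s2 in auto)
  have vY: "vb (int d) (Y d)" for d
    unfolding Y_def by (rule vb_sum) (rule vb_term, use s2 in auto)
  have vZ: "vb (int d) (Z d)" for d
    unfolding Z_def by (rule vb_sum) (rule vb_term, use s2 in auto)
  have vR: "vb 0 (R d)" for d
    unfolding R_def by (rule vb_sum) (rule vb_term0)
  have WYR: "W d = Y d * R d" for d by (simp add: W_def Y_def sum_distrib_right)
  have vW: "vb (int d) (W d)" for d
    using vb_mult[OF vY vR, of d] by (simp add: WYR)
  have RX: "R d = (\<Sum>e<d. X e)" for d
    by (simp add: R_def X_def sum_monic_deg_less)
  have RY: "(\<Sum>m\<in>monic_deg_less d. inverse (poly_to_Kinf m ^ (s - 1))) = (\<Sum>e<d. Y e)" for d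
    by (simp add: Y_def sum_monic_deg_less)
  have pd1: "X d * (Y d + (\<Sum>m\<in>monic_deg_less d. inverse (poly_to_Kinf m ^ (s - 1)))) = Z d" for d
    using per_degree[OF assms, of d] by (simp add: X_def Y_def Z_def s_def)
  have pd: "X d * (Y d + (\<Sum>e<d. Y e)) = Z d" for d
    using pd1[of d] by (simp only: RY)
  have fin: "(\<Sum>d<N. X d) * (\<Sum>d<N. Y d) = (\<Sum>d<N. Z d) + (\<Sum>d<N. W d)" for N
  proof (induction N)
    case (Suc N)
    have "(\<Sum>d<Suc N. X d) * (\<Sum>d<Suc N. Y d)
        = (\<Sum>d<N. X d) * (\<Sum>d<N. Y d) + X N * (Y N + (\<Sum>e<N. Y e)) + Y N * (\<Sum>e<N. X e)"
      by (simp add: algebra_simps)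
    also have "\<dots> = (\<Sum>d<Suc N. Z d) + (\<Sum>d<Suc N. W d)"
      by (simp add: Suc.IH pd WYR RX)
    finally show ?case .
  qed simp
  have cX: "\<forall>M. \<exists>N0. \<forall>N\<ge>N0. vb M ((\<Sum>d<N. X d) - suminf X)"
    by (rule vb_summable_suminf[OF vX])
  have cY: "\<forall>M. \<exists>N0. \<forall>N\<ge>N0. vb M ((\<Sum>d<N. Y d) - suminf Y)"
    by (rule vb_summable_suminf[OF vY])
  have cZ: "\<forall>M. \<exists>N0. \<forall>N\<ge>N0. vb M ((\<Sum>d<N. Z d) - suminf Z)"
    by (rule vb_summable_suminf[OF vZ])
  have cW: "\<forall>M. \<exists>N0. \<forall>N\<ge>N0. vb M ((\<Sum>d<N. W d) - suminf W)"
    by (rule vb_summable_suminf[OF vW])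
  have pX: "vb 0 (\<Sum>d<N. X d)" for N
    by (rule vb_sum) (rule vb_mono[OF vX], simp)
  have pY: "vb 0 (\<Sum>d<N. Y d)" for N
    by (rule vb_sum) (rule vb_mono[OF vY], simp)
  have c1: "\<forall>M. \<exists>N0. \<forall>N\<ge>N0. vb M ((\<Sum>d<N. X d) * (\<Sum>d<N. Y d) - suminf X * suminf Y)"
    by (rule vb_lim_mult[OF cX cY pX pY])
  have c2: "\<forall>M. \<exists>N0. \<forall>N\<ge>N0. vb M ((\<Sum>d<N. X d) * (\<Sum>d<N. Y d) - (suminf Z + suminf W))"
    using vb_lim_add[OF cZ cW] by (simp add: fin)
  have "suminf X * suminf Y = suminf Z + suminf W"
    by (rule vb_lim_unique[OF c1 c2])
  then show ?thesis by (simp only: eqs)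
qed


end
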